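(* For all integers $n,d,k\ge0$, $T(n,\omega^d\cdot k)\le P(n,\omega^d\cdot k)$.
   Context: $[c]=\{1,\dots,c\}$; ordinals are identified with sets of smaller ordinals; $\approx$ is order-equivalence; $\binom{S}{n}$ is the set of $n$-element subsets. $T(n,S)$ is the least $t\in\mathbb{N}$ such that for every $c\ge1$ and every $\mathrm{COL}:\binom{S}{n}\to[c]$ there is $S'\subseteq S$, $S'\approx S$, with $|\mathrm{COL}(\binom{S'}{n})|\le t$ ($\infty$ if none). Every $\beta<\omega^d\cdot k$ is uniquely $\omega^d b+\sum_{j<d}\omega^j a_j$ with $0\le b<k$, $a_j\in\mathbb{N}$. A coloring rule (CR) on $\binom{\omega^d\cdot k}{n}$ is a pair $(\mathcal{Y},\preceq)$ with $\mathcal{Y}:\{1,\dots,n\}\to\{0,\dots,k-1\}$ and $\preceq$ a total preorder on $I=\{(i,j):1\le i\le n,0\le j<d\}$ (with induced equivalence $\equiv$ and strict part $\prec$) such that: (1) if $d\ge1$, $(i,0)\prec(i',0)$ for $i<i'$; if $d=0$, $\mathcal{Y}(i)<\mathcal{Y}(i')$ for $i<i'$; (2) $(i,j)\equiv(i',j)$ for some $j$ implies $\mathcal{Y}(i)=\mathcal{Y}(i')$; (3) $(i,j)\prec(i,j')$ for $j>j'$; (4) $(i,j)\equiv(i',j')$ implies $j=j'$; (5) for $j>0$, $(i,j)\not\equiv(i',j)$ implies $(i,j-1)\not\equiv(i',j-1)$. $P(n,\omega^d\cdot k)$ is the total number of CRs on $\binom{\omega^d\cdot k}{n}$. *)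

theory Defs
  imports Main "HOL-Library.FuncSet" "HOL-Library.Extended_Nat"
begin

text \<open>Ordinals below omega^d * k are represented by their Cantor normal form
  coefficient lists [b, a_(d-1), ..., a_0] of length d+1 with b < k.
  The ordinal order is then the lexicographic order on these equal-length lists.\<close>

definition ord_less :: "nat list \<Rightarrow> nat list \<Rightarrow> bool" where
  "ord_less xs ys \<longleftrightarrow> (xs, ys) \<in> lexord {(a, b). a < b}"

definition omega_times :: "nat \<Rightarrow> nat \<Rightarrow> nat list set" where
  "omega_times d k = {xs. length xs = Suc d \<and> hd xs < k}"

definition order_equiv :: "nat list set \<Rightarrow> nat list set \<Rightarrow> bool" where
  "order_equiv A B \<longleftrightarrow> (\<exists>f. bij_betw f A B \<and>
      (\<forall>x\<in>A. \<forall>y\<in>A. ord_less x y \<longrightarrow> ord_less (f x) (f y)))"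

definition nsubsets :: "'a set \<Rightarrow> nat \<Rightarrow> 'a set set" where
  "nsubsets S n = {A. A \<subseteq> S \<and> finite A \<and> card A = n}"

definition T_prop :: "nat \<Rightarrow> nat list set \<Rightarrow> nat \<Rightarrow> bool" where
  "T_prop n S t \<longleftrightarrow> (\<forall>c::nat. c \<ge> 1 \<longrightarrow> (\<forall>COL :: nat list set \<Rightarrow> nat.
      COL ` nsubsets S n \<subseteq> {1..c} \<longrightarrow>
      (\<exists>S'. S' \<subseteq> S \<and> order_equiv S' S \<and> card (COL ` nsubsets S' n) \<le> t)))"

definition T :: "nat \<Rightarrow> nat list set \<Rightarrow> enat" where
  "T n S = (if \<exists>t. T_prop n S t then enat (LEAST t. T_prop n S t) else \<infinity>)"

definition CR_index :: "nat \<Rightarrow> nat \<Rightarrow> (nat \<times> nat) set" where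
  "CR_index n d = {1..n} \<times> {0..<d}"

definition is_CR :: "nat \<Rightarrow> nat \<Rightarrow> nat \<Rightarrow> (nat \<Rightarrow> nat) \<Rightarrow> ((nat \<times> nat) \<times> (nat \<times> nat)) set \<Rightarrow> bool" where
  "is_CR n d k Y R \<longleftrightarrow>
     (let I = CR_index n d;
          le = (\<lambda>x y. (x, y) \<in> R);
          eq = (\<lambda>x y. (x, y) \<in> R \<and> (y, x) \<in> R);
          lt = (\<lambda>x y. (x, y) \<in> R \<and> (y, x) \<notin> R)
      in Y \<in> {1..n} \<rightarrow>\<^sub>E {0..<k}
       \<and> R \<subseteq> I \<times> I
       \<and> (\<forall>x\<in>I. le x x)
       \<and> (\<forall>x\<in>I. \<forall>y\<in>I. \<forall>z\<in>I. le x y \<longrightarrow> le y z \<longrightarrow> le x z)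
       \<and> (\<forall>x\<in>I. \<forall>y\<in>I. le x y \<or> le y x)
       \<comment> \<open>(1)\<close>
       \<and> (d \<ge> 1 \<longrightarrow> (\<forall>i\<in>{1..n}. \<forall>i'\<in>{1..n}. i < i' \<longrightarrow> lt (i, 0) (i', 0)))
       \<and> (d = 0 \<longrightarrow> (\<forall>i\<in>{1..n}. \<forall>i'\<in>{1..n}. i < i' \<longrightarrow> Y i < Y i'))
       \<comment> \<open>(2)\<close>
       \<and> (\<forall>i\<in>{1..n}. \<forall>i'\<in>{1..n}. \<forall>j\<in>{0..<d}. eq (i, j) (i', j) \<longrightarrow> Y i = Y i')
       \<comment> \<open>(3)\<close>
       \<and> (\<forall>i\<in>{1..n}. \<forall>j\<in>{0..<d}. \<forall>j'\<in>{0..<d}. j > j' \<longrightarrow> lt (i, j) (i, j'))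
       \<comment> \<open>(4)\<close>
       \<and> (\<forall>i\<in>{1..n}. \<forall>i'\<in>{1..n}. \<forall>j\<in>{0..<d}. \<forall>j'\<in>{0..<d}. eq (i, j) (i', j') \<longrightarrow> j = j')
       \<comment> \<open>(5)\<close>
       \<and> (\<forall>i\<in>{1..n}. \<forall>i'\<in>{1..n}. \<forall>j\<in>{0..<d}. j > 0 \<longrightarrow>
             \<not> eq (i, j) (i', j) \<longrightarrow> \<not> eq (i, j - 1) (i', j - 1)))"

definition P :: "nat \<Rightarrow> nat \<Rightarrow> nat \<Rightarrow> nat" where
  "P n d k = card {(Y, R). is_CR n d k Y R}"

end

theory Submission
  imports Defs "HOL-Library.Ramsey" "HOL-Library.List_Lexorder" "HOL-Library.Nat_Bijection"
begin

fun M :: "nat list \<Rightarrow> nat" where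
  "M [] = 0"
| "M (a # r) = Suc (prod_encode (M r, a))"

definition N :: "nat list \<Rightarrow> nat" where "N xs = M (rev xs)"

lemma N_snoc: "N (p @ [a]) = Suc (prod_encode (N p, a))"
  by (simp add: N_def)

lemma inj_M: "M xs = M ys \<Longrightarrow> xs = ys"
proof (induction xs arbitrary: ys)
  case Nil then show ?case by (cases ys) auto
next
  case (Cons a xs) then show ?case by (cases ys) auto
qed

lemma inj_N: "N xs = N ys \<Longrightarrow> xs = ys"
  unfolding N_def using inj_M by fastforce

lemma triangle_mono: "a < b \<Longrightarrow> triangle a < triangle b"
proof (induction b)
  case 0 then show ?case by simp
next
  case (Suc b) then show ?case by (cases "a = b") (auto simp: triangle_Suc)
qed

lemma prod_encode_mono2: "a < b \<Longrightarrow> prod_encode (m, a) < prod_encode (m, b)"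
  by (simp add: prod_encode_def triangle_mono)

lemma N_snoc_mono: "a < b \<Longrightarrow> N (p @ [a]) < N (p @ [b])"
  by (simp add: N_snoc prod_encode_mono2)

lemma N_prefix: "m < m' \<Longrightarrow> m' \<le> length x \<Longrightarrow> N (take m x) < N (take m' x)"
proof (induction m')
  case 0 then show ?case by simp
next
  case (Suc m')
  have e: "take (Suc m') x = take m' x @ [x ! m']"
    using Suc.prems by (simp add: take_Suc_conv_app_nth)
  have "N (take m' x) < N (take (Suc m') x)"
    unfolding e N_snoc using le_prod_encode_1 le_imp_less_Suc by blast
  then show ?case using Suc by (cases "m = m'") auto
qed

lemma same_pre_eq:
  fixes f g :: "'a \<Rightarrow> nat"
  assumes img: "f ` I = g ` I" and ord: "\<forall>p\<in>I. \<forall>q\<in>I. f p \<le> f q \<longleftrightarrow> g p \<le> g q"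
  shows "\<forall>p\<in>I. f p = g p"
proof (rule ccontr)
  assume "\<not> ?thesis"
  then obtain p0 where p0: "p0 \<in> I" "f p0 \<noteq> g p0" by auto
  define D where "D = {p\<in>I. f p \<noteq> g p}"
  define v where "v = (LEAST v. \<exists>p\<in>D. v = min (f p) (g p))"
  have "\<exists>p\<in>D. v = min (f p) (g p)"
    unfolding v_def by (rule LeastI[of _ "min (f p0) (g p0)"]) (use p0 D_def in auto)
  then obtain p where p: "p \<in> D" "v = min (f p) (g p)" by auto
  have vmin: "\<And>q. q \<in> D \<Longrightarrow> v \<le> min (f q) (g q)"
    unfolding v_def by (rule Least_le) auto
  have pI: "p \<in> I" "f p \<noteq> g p" using p D_def by auto
  show False
  proof (cases "f p < g p")
    case True
    then have "f p \<in> g ` I" using img pI by auto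
    then obtain q where q: "q \<in> I" "f p = g q" by auto
    then have "\<not> f p \<le> f q" using ord pI True by (metis not_le)
    then have fq: "f q < f p" by simp
    then have "q \<in> D" using q D_def by auto
    then show False using vmin[of q] fq p True by simp
  next
    case False
    then have lt: "g p < f p" using pI by simp
    then have "g p \<in> f ` I" using img pI by auto
    then obtain q where q: "q \<in> I" "g p = f q" by auto
    then have "\<not> g p \<le> g q" using ord pI lt by (metis not_le)
    then have gq: "g q < g p" by simp
    then have "q \<in> D" using q D_def by auto
    then show False using vmin[of q] gq p lt by simp
  qed
qed

lemma card_same_kernel:
  fixes f g :: "'a \<Rightarrow> 'b"
  assumes "\<forall>p\<in>I. \<forall>q\<in>I. f p = f q \<longleftrightarrow> g p = g q"
  shows "card (f ` I) = card (g ` I)"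
proof -
  define h where "h v = g (SOME p. p \<in> I \<and> f p = v)" for v
  have hf: "h (f p) = g p" if "p \<in> I" for p
  proof -
    have "(SOME q. q \<in> I \<and> f q = f p) \<in> I \<and> f (SOME q. q \<in> I \<and> f q = f p) = f p"
      by (rule someI[of _ p]) (use that in auto)
    then show ?thesis unfolding h_def using assms that by blast
  qed
  have "inj_on h (f ` I)"
    using assms by (auto simp: inj_on_def hf)
  moreover have "h ` (f ` I) = g ` I"
    using hf by (auto simp: image_image)
  ultimately show ?thesis by (metis card_image)
qed

lemma multi_ramsey:
  fixes f :: "'q \<Rightarrow> 'a set \<Rightarrow> nat" and r :: "'q \<Rightarrow> nat"
  assumes "finite F"
  shows "infinite H \<Longrightarrow> (\<forall>q\<in>F. \<forall>X. f q X < s) \<Longrightarrow>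
    \<exists>H'\<subseteq>H. infinite H' \<and> (\<forall>q\<in>F. \<exists>t. \<forall>X. X \<subseteq> H' \<and> finite X \<and> card X = r q \<longrightarrow> f q X = t)"
  using assms
proof (induction F rule: finite_induct)
  case empty then show ?case by auto
next
  case (insert q F)
  then obtain H1 where H1: "H1 \<subseteq> H" "infinite H1"
     "\<forall>q\<in>F. \<exists>t. \<forall>X. X \<subseteq> H1 \<and> finite X \<and> card X = r q \<longrightarrow> f q X = t" by auto
  obtain H2 t where H2: "H2 \<subseteq> H1" "infinite H2"
     "\<forall>X. X \<subseteq> H2 \<and> finite X \<and> card X = r q \<longrightarrow> f q X = t"
    using Ramsey[OF H1(2), of "r q" "f q" s] insert.prems by auto
  show ?case
    apply (rule exI[of _ H2])
    using H1 H2 by (auto; meson subset_trans)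
qed

definition emb :: "nat set \<Rightarrow> nat \<Rightarrow> nat list \<Rightarrow> nat list" where
  "emb H d x = map (\<lambda>t. if t = 0 then x ! 0 else enumerate H (N (take (Suc t) x))) [0..<Suc d]"

lemma emb_length [simp]: "length (emb H d x) = Suc d"
  by (simp add: emb_def)

lemma emb_nth: "t < Suc d \<Longrightarrow> emb H d x ! t = (if t = 0 then x ! 0 else enumerate H (N (take (Suc t) x)))"
  unfolding emb_def by (simp del: upt_Suc)

lemma ord_less_iff: "ord_less xs ys \<longleftrightarrow> xs < ys"
  by (simp add: ord_less_def list_less_def)

lemma omega_times_mem: "x \<in> omega_times d k \<longleftrightarrow> length x = Suc d \<and> x ! 0 < k"
  unfolding omega_times_def by (cases x) auto

lemma emb_in: "x \<in> omega_times d k \<Longrightarrow> emb H d x \<in> omega_times d k"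
  by (simp add: omega_times_mem emb_nth)

lemma lex_eq_len: "length xs = L \<Longrightarrow> length ys = L \<Longrightarrow>
   xs < ys \<longleftrightarrow> (\<exists>t<L. take t xs = take t ys \<and> xs ! t < ys ! t)"
  by (simp add: list_less_def lexord_take_index_conv)

lemma emb_mono:
  assumes H: "infinite H" and x: "x \<in> omega_times d k" and y: "y \<in> omega_times d k" and lt: "x < y"
  shows "emb H d x < emb H d y"
proof -
  have lx: "length x = Suc d" and ly: "length y = Suc d" using x y by (auto simp: omega_times_mem)
  obtain t where t: "t < Suc d" "take t x = take t y" "x ! t < y ! t"
    using lt lex_eq_len[OF lx ly] by auto
  have pre: "take m x = take m y" if "m \<le> t" for m
    using t(2) that by (metis min.absorb1 take_take)
  have "take t (emb H d x) = take t (emb H d y)"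
  proof (rule nth_equalityI)
    show "length (take t (emb H d x)) = length (take t (emb H d y))" by simp
    fix s assume "s < length (take t (emb H d x))"
    then have s: "s < t" "s < Suc d" using t by auto
    have "x ! s = y ! s" using t(2) s by (metis nth_take)
    moreover have "take (Suc s) x = take (Suc s) y" using pre s by simp
    ultimately show "take t (emb H d x) ! s = take t (emb H d y) ! s"
      using s by (cases "s = 0") (simp_all add: emb_nth)
  qed
  moreover have "emb H d x ! t < emb H d y ! t"
  proof (cases "t = 0")
    case True then show ?thesis using t by (simp add: emb_nth)
  next
    case False
    have "take (Suc t) x = take t x @ [x ! t]" using lx t by (simp add: take_Suc_conv_app_nth)
    moreover have "take (Suc t) y = take t x @ [y ! t]" using ly t by (simp add: take_Suc_conv_app_nth)
    ultimately have "N (take (Suc t) x) < N (take (Suc t) y)" using t N_snoc_mono by simp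
    then show ?thesis using False t H by (simp add: emb_nth)
  qed
  ultimately show ?thesis using lex_eq_len[of "emb H d x" "Suc d" "emb H d y"] t by auto
qed

lemma emb_inj:
  assumes H: "infinite H"
  shows "inj_on (emb H d) (omega_times d k)"
proof (rule inj_onI)
  fix x y assume x: "x \<in> omega_times d k" and y: "y \<in> omega_times d k" and e: "emb H d x = emb H d y"
  show "x = y"
  proof (rule ccontr)
    assume "x \<noteq> y"
    then have "x < y \<or> y < x" by auto
    then show False using emb_mono[OF H x y] emb_mono[OF H y x] e by auto
  qed
qed

lemma emb_order_equiv:
  assumes H: "infinite H"
  shows "order_equiv (emb H d ` omega_times d k) (omega_times d k)"
proof -
  let ?S = "omega_times d k"
  let ?f = "inv_into ?S (emb H d)"
  have b: "bij_betw (emb H d) ?S (emb H d ` ?S)" using emb_inj[OF H] by (simp add: bij_betw_imageI)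
  have "bij_betw ?f (emb H d ` ?S) ?S" by (rule bij_betw_inv_into[OF b])
  moreover have "\<forall>u\<in>emb H d ` ?S. \<forall>v\<in>emb H d ` ?S. ord_less u v \<longrightarrow> ord_less (?f u) (?f v)"
  proof (intro ballI impI)
    fix u v assume u: "u \<in> emb H d ` ?S" and v: "v \<in> emb H d ` ?S" and "ord_less u v"
    then have uv: "u < v" by (simp add: ord_less_iff)
    obtain x y where x: "x \<in> ?S" "u = emb H d x" and y: "y \<in> ?S" "v = emb H d y" using u v by auto
    have fx: "?f u = x" using x emb_inj[OF H] by simp
    have fy: "?f v = y" using y emb_inj[OF H] by simp
    have "x < y"
    proof (rule ccontr)
      assume "\<not> x < y"
      then have "y < x \<or> y = x" by auto
      then show False using emb_mono[OF H y(1) x(1)] uv x y by auto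
    qed
    then show "ord_less (?f u) (?f v)" by (simp add: fx fy ord_less_iff)
  qed
  ultimately show ?thesis unfolding order_equiv_def by blast
qed

lemma emb_last: "last (emb H d x) = (if d = 0 then x ! 0 else enumerate H (N (take (Suc d) x)))"
proof -
  have "emb H d x \<noteq> []" by (metis emb_length length_0_conv nat.distinct(1))
  then show ?thesis by (simp add: last_conv_nth emb_nth)
qed

lemma emb_inj_last:
  assumes H: "infinite H"
  shows "inj_on last (emb H d ` omega_times d k)"
proof (rule inj_onI)
  fix u v assume u: "u \<in> emb H d ` omega_times d k" and v: "v \<in> emb H d ` omega_times d k"
    and e: "last u = last v"
  obtain x y where x: "x \<in> omega_times d k" "u = emb H d x" and y: "y \<in> omega_times d k" "v = emb H d y"
    using u v by auto
  have lx: "length x = Suc d" and ly: "length y = Suc d" using x y by (auto simp: omega_times_mem)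
  have "x = y"
  proof (cases "d = 0")
    case True
    then have "x ! 0 = y ! 0" using e x y by (simp add: emb_last)
    then show ?thesis using lx ly True by (intro nth_equalityI) auto
  next
    case False
    then have "enumerate H (N (take (Suc d) x)) = enumerate H (N (take (Suc d) y))"
      using e x y by (simp add: emb_last)
    then have "N x = N y" using H lx ly by (simp add: inj_enumerate inj_eq)
    then show ?thesis by (rule inj_N)
  qed
  then show "u = v" using x y by simp
qed

definition Lk :: "nat list set \<Rightarrow> nat list" where
  "Lk A = sorted_list_of_set (last ` A)"
definition crel :: "nat list set \<Rightarrow> nat \<Rightarrow> nat list" where
  "crel A i = (THE x. x \<in> A \<and> last x = Lk A ! (i - 1))"
definition crval :: "nat \<Rightarrow> nat list set \<Rightarrow> nat \<times> nat \<Rightarrow> nat" where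
  "crval d A p = crel A (fst p) ! (d - snd p)"
definition tyY :: "nat \<Rightarrow> nat list set \<Rightarrow> nat \<Rightarrow> nat" where
  "tyY n A = restrict (\<lambda>i. crel A i ! 0) {1..n}"
definition tyR :: "nat \<Rightarrow> nat \<Rightarrow> nat list set \<Rightarrow> ((nat \<times> nat) \<times> (nat \<times> nat)) set" where
  "tyR n d A = {(p, q). p \<in> CR_index n d \<and> q \<in> CR_index n d \<and> crval d A p \<le> crval d A q}"
definition Zs :: "nat \<Rightarrow> nat \<Rightarrow> nat list set \<Rightarrow> nat set" where
  "Zs n d A = crval d A ` CR_index n d"
definition nice :: "nat \<Rightarrow> nat \<Rightarrow> nat \<Rightarrow> nat list set \<Rightarrow> bool" where
  "nice n d k A \<longleftrightarrow> A \<in> nsubsets (omega_times d k) n \<and> inj_on last A"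

lemma nice_Lk:
  assumes "nice n d k A"
  shows "length (Lk A) = n" "sorted_wrt (<) (Lk A)" "set (Lk A) = last ` A"
proof -
  have f: "finite A" "card A = n" "inj_on last A" using assms by (auto simp: nice_def nsubsets_def)
  then show "length (Lk A) = n" by (simp add: Lk_def card_image)
  show "sorted_wrt (<) (Lk A)" by (simp add: Lk_def)
  show "set (Lk A) = last ` A" using f by (simp add: Lk_def)
qed

lemma crel_prop:
  assumes "nice n d k A" "i \<in> {1..n}"
  shows "crel A i \<in> A \<and> last (crel A i) = Lk A ! (i - 1)"
proof -
  have inj: "inj_on last A" using assms by (simp add: nice_def)
  have "Lk A ! (i - 1) \<in> last ` A" using nice_Lk[OF assms(1)] assms(2)
    by (metis atLeastAtMost_iff diff_less less_le_trans less_one nth_mem not_less)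
  then obtain x where x: "x \<in> A" "last x = Lk A ! (i - 1)" by auto
  have "\<exists>!x. x \<in> A \<and> last x = Lk A ! (i - 1)"
    using x inj by (metis inj_onD)
  then show ?thesis unfolding crel_def by (rule theI')
qed

lemma crel_img:
  assumes "nice n d k A"
  shows "A = crel A ` {1..n}"
proof
  show "crel A ` {1..n} \<subseteq> A" using crel_prop[OF assms] by auto
  show "A \<subseteq> crel A ` {1..n}"
  proof
    fix x assume x: "x \<in> A"
    then have "last x \<in> set (Lk A)" using nice_Lk[OF assms] by auto
    then obtain t where t: "t < n" "Lk A ! t = last x" using nice_Lk[OF assms] by (metis in_set_conv_nth)
    have c: "crel A (Suc t) \<in> A \<and> last (crel A (Suc t)) = Lk A ! t" using crel_prop[OF assms, of "Suc t"] t by simp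
    have "crel A (Suc t) = x" using c t x assms unfolding nice_def by (metis inj_onD)
    then show "x \<in> crel A ` {1..n}" using t by (metis Suc_leI atLeastAtMost_iff image_eqI le_add1 plus_1_eq_Suc)
  qed
qed

lemma crel_len:
  assumes "nice n d k A" "i \<in> {1..n}"
  shows "length (crel A i) = Suc d"
  using crel_prop[OF assms] assms(1) by (auto simp: nice_def nsubsets_def omega_times_mem)

lemma nice_unique:
  assumes A: "nice n d k A" and B: "nice n d k B" and Y: "tyY n A = tyY n B"
    and R: "tyR n d A = tyR n d B" and Z: "Zs n d A = Zs n d B"
  shows "A = B"
proof -
  have ord: "\<forall>p\<in>CR_index n d. \<forall>q\<in>CR_index n d. crval d A p \<le> crval d A q \<longleftrightarrow> crval d B p \<le> crval d B q"
  proof (intro ballI)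
    fix p q assume "p \<in> CR_index n d" "q \<in> CR_index n d"
    then show "crval d A p \<le> crval d A q \<longleftrightarrow> crval d B p \<le> crval d B q"
      using R unfolding tyR_def by (metis (no_types, lifting) case_prod_conv mem_Collect_eq)
  qed
  have V: "\<forall>p\<in>CR_index n d. crval d A p = crval d B p"
    by (rule same_pre_eq) (use Z ord in \<open>auto simp: Zs_def\<close>)
  have E: "crel A i = crel B i" if i: "i \<in> {1..n}" for i
  proof (rule nth_equalityI)
    show "length (crel A i) = length (crel B i)" using crel_len[OF A i] crel_len[OF B i] by simp
    fix t assume "t < length (crel A i)"
    then have t: "t < Suc d" using crel_len[OF A i] by simp
    show "crel A i ! t = crel B i ! t"
    proof (cases "t = 0")
      case True
      then show ?thesis using Y i unfolding tyY_def by (metis restrict_apply')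
    next
      case False
      then have "(i, d - t) \<in> CR_index n d" using i t by (auto simp: CR_index_def)
      then have "crval d A (i, d - t) = crval d B (i, d - t)" using V by blast
      then show ?thesis using False t by (simp add: crval_def)
    qed
  qed
  show ?thesis using crel_img[OF A] crel_img[OF B] E by (metis image_cong)
qed

lemma card_Zs_unique:
  assumes "tyR n d A = tyR n d B"
  shows "card (Zs n d A) = card (Zs n d B)"
  unfolding Zs_def
proof (rule card_same_kernel, intro ballI)
  fix p q assume "p \<in> CR_index n d" "q \<in> CR_index n d"
  then have "crval d A p = crval d A q \<longleftrightarrow> (p, q) \<in> tyR n d A \<and> (q, p) \<in> tyR n d A"
    "crval d B p = crval d B q \<longleftrightarrow> (p, q) \<in> tyR n d B \<and> (q, p) \<in> tyR n d B"
    by (auto simp: tyR_def)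
  then show "crval d A p = crval d A q \<longleftrightarrow> crval d B p = crval d B q" using assms by simp
qed

lemma nice_emb_CR:
  assumes H: "infinite H" and B: "nice n d k B" and sub: "B \<subseteq> emb H d ` omega_times d k"
  shows "is_CR n d k (tyY n B) (tyR n d B)"
proof -
  let ?S = "omega_times d k"
  let ?I = "CR_index n d"
  define X where "X i = inv_into ?S (emb H d) (crel B i)" for i
  have X: "X i \<in> ?S \<and> crel B i = emb H d (X i)" if "i \<in> {1..n}" for i
  proof -
    have "crel B i \<in> emb H d ` ?S" using crel_prop[OF B that] sub by auto
    then show ?thesis unfolding X_def by (metis f_inv_into_f inv_into_into)
  qed
  have lenX: "length (X i) = Suc d" if "i \<in> {1..n}" for i using X[OF that] by (simp add: omega_times_mem)
  have X0: "X i ! 0 < k" if "i \<in> {1..n}" for i using X[OF that] by (simp add: omega_times_mem)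
  have V: "crval d B (i, j) = enumerate H (N (take (Suc (d - j)) (X i)))" if "i \<in> {1..n}" "j < d" for i j
    using X[OF that(1)] that by (simp add: crval_def emb_nth)
  have veq: "crval d B (i, j) = crval d B (i', j') \<longleftrightarrow> take (Suc (d - j)) (X i) = take (Suc (d - j')) (X i')"
    if "i \<in> {1..n}" "j < d" "i' \<in> {1..n}" "j' < d" for i j i' j'
    using V[OF that(1,2)] V[OF that(3,4)] H by (auto simp: inj_enumerate inj_eq dest: inj_N)
  have Yi: "tyY n B i = X i ! 0" if "i \<in> {1..n}" for i
    using X[OF that] that by (simp add: tyY_def emb_nth)
  have lastc: "last (crel B i) = crel B i ! d" if "i \<in> {1..n}" for i
    using crel_len[OF B that] by (metis diff_Suc_1 last_conv_nth list.size(3) nat.distinct(1))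
  have LK: "Lk B ! (i - 1) < Lk B ! (i' - 1)" if "i \<in> {1..n}" "i' \<in> {1..n}" "i < i'" for i i'
  proof -
    have "sorted_wrt (<) (Lk B)" "length (Lk B) = n" using nice_Lk[OF B] by auto
    moreover have "i - 1 < i' - 1" "i' - 1 < n" using that by auto
    ultimately show ?thesis using sorted_wrt_nth_less by blast
  qed
  have R: "(p, q) \<in> tyR n d B \<longleftrightarrow> p \<in> ?I \<and> q \<in> ?I \<and> crval d B p \<le> crval d B q" for p q
    by (simp add: tyR_def)
  have Ipair: "(i, j) \<in> ?I \<longleftrightarrow> i \<in> {1..n} \<and> j < d" for i j by (auto simp: CR_index_def)
  show ?thesis
    unfolding is_CR_def Let_def
  proof (intro conjI)
    show "tyY n B \<in> {1..n} \<rightarrow>\<^sub>E {0..<k}" using X0 Yi by (auto simp: tyY_def)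
    show "tyR n d B \<subseteq> ?I \<times> ?I" by (auto simp: tyR_def)
    show "\<forall>x\<in>?I. (x, x) \<in> tyR n d B" by (auto simp: tyR_def)
    show "\<forall>x\<in>?I. \<forall>y\<in>?I. \<forall>z\<in>?I. (x, y) \<in> tyR n d B \<longrightarrow> (y, z) \<in> tyR n d B \<longrightarrow> (x, z) \<in> tyR n d B"
      by (auto simp: tyR_def)
    show "\<forall>x\<in>?I. \<forall>y\<in>?I. (x, y) \<in> tyR n d B \<or> (y, x) \<in> tyR n d B" by (auto simp: tyR_def)
    show "1 \<le> d \<longrightarrow> (\<forall>i\<in>{1..n}. \<forall>i'\<in>{1..n}. i < i' \<longrightarrow>
        (((i, 0), (i', 0)) \<in> tyR n d B \<and> ((i', 0), (i, 0)) \<notin> tyR n d B))"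
    proof (intro impI ballI)
      fix i i' assume d: "1 \<le> d" and i: "i \<in> {1..n}" and i': "i' \<in> {1..n}" and lt: "i < i'"
      have "crval d B (i, 0) < crval d B (i', 0)"
        using LK[OF i i' lt] crel_prop[OF B i] crel_prop[OF B i'] lastc[OF i] lastc[OF i']
        by (simp add: crval_def)
      then show "((i, 0), (i', 0)) \<in> tyR n d B \<and> ((i', 0), (i, 0)) \<notin> tyR n d B"
        using i i' d by (auto simp: R Ipair)
    qed
    show "d = 0 \<longrightarrow> (\<forall>i\<in>{1..n}. \<forall>i'\<in>{1..n}. i < i' \<longrightarrow> tyY n B i < tyY n B i')"
    proof (intro impI ballI)
      fix i i' assume d: "d = 0" and i: "i \<in> {1..n}" and i': "i' \<in> {1..n}" and lt: "i < i'"
      show "tyY n B i < tyY n B i'"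
        using LK[OF i i' lt] crel_prop[OF B i] crel_prop[OF B i'] lastc[OF i] lastc[OF i'] d i i'
        by (simp add: tyY_def)
    qed
    show "\<forall>i\<in>{1..n}. \<forall>i'\<in>{1..n}. \<forall>j\<in>{0..<d}.
        ((i, j), (i', j)) \<in> tyR n d B \<and> ((i', j), (i, j)) \<in> tyR n d B \<longrightarrow> tyY n B i = tyY n B i'"
    proof (intro ballI impI)
      fix i i' j assume i: "i \<in> {1..n}" and i': "i' \<in> {1..n}" and j: "j \<in> {0..<d}"
        and "((i, j), (i', j)) \<in> tyR n d B \<and> ((i', j), (i, j)) \<in> tyR n d B"
      then have "crval d B (i, j) = crval d B (i', j)" by (auto simp: R)
      then have "take (Suc (d - j)) (X i) = take (Suc (d - j)) (X i')" using veq i i' j by auto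
      then have "X i ! 0 = X i' ! 0" by (metis nth_take zero_less_Suc)
      then show "tyY n B i = tyY n B i'" using Yi i i' by simp
    qed
    show "\<forall>i\<in>{1..n}. \<forall>j\<in>{0..<d}. \<forall>j'\<in>{0..<d}. j' < j \<longrightarrow>
        (((i, j), (i, j')) \<in> tyR n d B \<and> ((i, j'), (i, j)) \<notin> tyR n d B)"
    proof (intro ballI impI)
      fix i j j' assume i: "i \<in> {1..n}" and j: "j \<in> {0..<d}" and j': "j' \<in> {0..<d}" and lt: "j' < j"
      have "N (take (Suc (d - j)) (X i)) < N (take (Suc (d - j')) (X i))"
        using lt j j' lenX[OF i] by (intro N_prefix) auto
      then have "crval d B (i, j) < crval d B (i, j')" using V i j j' H by simp
      then show "((i, j), (i, j')) \<in> tyR n d B \<and> ((i, j'), (i, j)) \<notin> tyR n d B"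
        using i j j' by (auto simp: R Ipair)
    qed
    show "\<forall>i\<in>{1..n}. \<forall>i'\<in>{1..n}. \<forall>j\<in>{0..<d}. \<forall>j'\<in>{0..<d}.
        ((i, j), (i', j')) \<in> tyR n d B \<and> ((i', j'), (i, j)) \<in> tyR n d B \<longrightarrow> j = j'"
    proof (intro ballI impI)
      fix i i' j j' assume i: "i \<in> {1..n}" and i': "i' \<in> {1..n}" and j: "j \<in> {0..<d}" and j': "j' \<in> {0..<d}"
        and "((i, j), (i', j')) \<in> tyR n d B \<and> ((i', j'), (i, j)) \<in> tyR n d B"
      then have "crval d B (i, j) = crval d B (i', j')" by (auto simp: R)
      then have "take (Suc (d - j)) (X i) = take (Suc (d - j')) (X i')" using veq i i' j j' by auto
      then have "length (take (Suc (d - j)) (X i)) = length (take (Suc (d - j')) (X i'))" by simp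
      then show "j = j'" using lenX[OF i] lenX[OF i'] j j' by auto
    qed
    show "\<forall>i\<in>{1..n}. \<forall>i'\<in>{1..n}. \<forall>j\<in>{0..<d}. 0 < j \<longrightarrow>
        \<not> (((i, j), (i', j)) \<in> tyR n d B \<and> ((i', j), (i, j)) \<in> tyR n d B) \<longrightarrow>
        \<not> (((i, j - 1), (i', j - 1)) \<in> tyR n d B \<and> ((i', j - 1), (i, j - 1)) \<in> tyR n d B)"
    proof (intro ballI impI notI)
      fix i i' j assume i: "i \<in> {1..n}" and i': "i' \<in> {1..n}" and j: "j \<in> {0..<d}" and j0: "0 < j"
        and ne: "\<not> (((i, j), (i', j)) \<in> tyR n d B \<and> ((i', j), (i, j)) \<in> tyR n d B)"
        and "((i, j - 1), (i', j - 1)) \<in> tyR n d B \<and> ((i', j - 1), (i, j - 1)) \<in> tyR n d B"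
      then have "crval d B (i, j - 1) = crval d B (i', j - 1)" by (auto simp: R)
      then have "take (Suc (d - (j - 1))) (X i) = take (Suc (d - (j - 1))) (X i')" using veq i i' j by auto
      then have "take (Suc (d - j)) (take (Suc (d - (j - 1))) (X i)) = take (Suc (d - j)) (take (Suc (d - (j - 1))) (X i'))"
        by simp
      then have "take (Suc (d - j)) (X i) = take (Suc (d - j)) (X i')" using j j0 by (subgoal_tac "d - j \<le> Suc d - j") (auto simp: min_def)
      then have "crval d B (i, j) = crval d B (i', j)" using veq i i' j by auto
      then show False using ne i i' j by (auto simp: R Ipair)
    qed
  qed
qed

lemma nice_emb_Zs:
  assumes H: "infinite H" and B: "nice n d k B" and sub: "B \<subseteq> emb H d ` omega_times d k"
  shows "Zs n d B \<subseteq> H"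
proof
  fix v assume "v \<in> Zs n d B"
  then obtain i j where ij: "i \<in> {1..n}" "j < d" "v = crval d B (i, j)"
    by (auto simp: Zs_def CR_index_def)
  have "crel B i \<in> emb H d ` omega_times d k" using crel_prop[OF B ij(1)] sub by auto
  then obtain x where "crel B i = emb H d x" by auto
  then have "v = enumerate H (N (take (Suc (d - j)) x))" using ij by (simp add: crval_def emb_nth)
  then show "v \<in> H" using H by (simp add: enumerate_in_set)
qed

lemma nice_the:
  assumes "nice n d k A"
  shows "(THE B. nice n d k B \<and> (tyY n B, tyR n d B) = (tyY n A, tyR n d A) \<and> Zs n d B = Zs n d A) = A"
proof (rule the_equality)
  show "nice n d k A \<and> (tyY n A, tyR n d A) = (tyY n A, tyR n d A) \<and> Zs n d A = Zs n d A" using assms by simp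
  fix B assume "nice n d k B \<and> (tyY n B, tyR n d B) = (tyY n A, tyR n d A) \<and> Zs n d B = Zs n d A"
  then show "B = A" using nice_unique[of n d k B A] assms by auto
qed

theorem theorem9p3:
  fixes n d k :: nat
  shows "T n (omega_times d k) \<le> enat (P n d k)"
proof -
  let ?S = "omega_times d k"
  let ?I = "CR_index n d"
  define CRs where "CRs = {(Y, R). is_CR n d k Y R}"
  have "CRs \<subseteq> ({1..n} \<rightarrow>\<^sub>E {0..<k}) \<times> Pow (?I \<times> ?I)"
    unfolding CRs_def is_CR_def Let_def by auto
  moreover have "finite ?I" by (simp add: CR_index_def)
  ultimately have finCR: "finite CRs" by (meson finite_PiE finite_SigmaI finite_Pow_iff finite_atLeastAtMost finite_atLeastLessThan finite_subset)
  have PC: "P n d k = card CRs" by (simp add: P_def CRs_def)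
  have TP: "T_prop n ?S (P n d k)"
    unfolding T_prop_def
  proof (intro allI impI)
    fix c :: nat and COL :: "nat list set \<Rightarrow> nat"
    assume c: "1 \<le> c" and COLr: "COL ` nsubsets ?S n \<subseteq> {1..c}"
    define G where "G \<tau> Z = (if \<exists>A. nice n d k A \<and> (tyY n A, tyR n d A) = \<tau> \<and> Zs n d A = Z
       then COL (THE A. nice n d k A \<and> (tyY n A, tyR n d A) = \<tau> \<and> Zs n d A = Z) else 0)" for \<tau> Z
    have GA: "G (tyY n A, tyR n d A) (Zs n d A) = COL A" if "nice n d k A" for A
      using nice_the[OF that] that unfolding G_def by auto
    have Gb: "G \<tau> Z < Suc c" for \<tau> Z
    proof (cases "\<exists>A. nice n d k A \<and> (tyY n A, tyR n d A) = \<tau> \<and> Zs n d A = Z")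
      case True
      then obtain A where A: "nice n d k A" "(tyY n A, tyR n d A) = \<tau>" "Zs n d A = Z" by blast
      have "COL A \<in> {1..c}" using COLr A(1) by (auto simp: nice_def)
      then show ?thesis using GA[OF A(1)] A by auto
    next
      case False
      have "G \<tau> Z = 0" unfolding G_def using False by (rule if_not_P)
      then show ?thesis by simp
    qed
    define F where "F = CRs \<times> {0..card ?I}"
    have finF: "finite F" using finCR by (simp add: F_def)
    obtain H where H: "infinite H"
      "\<forall>q\<in>F. \<exists>t. \<forall>X. X \<subseteq> H \<and> finite X \<and> card X = snd q \<longrightarrow> G (fst q) X = t"
      using multi_ramsey[OF finF, of "UNIV :: nat set" "\<lambda>q X. G (fst q) X" "Suc c" snd] Gb by auto
    then obtain tt where tt: "\<forall>q\<in>F. \<forall>X. X \<subseteq> H \<and> finite X \<and> card X = snd q \<longrightarrow> G (fst q) X = tt q"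
      by metis
    define S' where "S' = emb H d ` ?S"
    have S'S: "S' \<subseteq> ?S" using emb_in by (auto simp: S'_def)
    have niceB: "nice n d k B" if "B \<in> nsubsets S' n" for B
      using that S'S emb_inj_last[OF H(1), of d k] unfolding nice_def nsubsets_def S'_def
      by (auto intro: inj_on_subset)
    define ty where "ty B = (tyY n B, tyR n d B)" for B
    have tyCR: "ty B \<in> CRs" if "B \<in> nsubsets S' n" for B
      using nice_emb_CR[OF H(1) niceB[OF that]] that by (auto simp: ty_def CRs_def nsubsets_def S'_def)
    have COLB: "COL B = tt (ty B, card (Zs n d B))" if B: "B \<in> nsubsets S' n" for B
    proof -
      have Zsub: "Zs n d B \<subseteq> H" using nice_emb_Zs[OF H(1) niceB[OF B]] B by (auto simp: nsubsets_def S'_def)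
      have fZ: "finite (Zs n d B)" using \<open>finite ?I\<close> by (simp add: Zs_def)
      have cZ: "card (Zs n d B) \<le> card ?I" unfolding Zs_def using \<open>finite ?I\<close> by (rule card_image_le)
      have "(ty B, card (Zs n d B)) \<in> F" using tyCR[OF B] cZ by (simp add: F_def)
      then have "G (ty B) (Zs n d B) = tt (ty B, card (Zs n d B))" using tt Zsub fZ by auto
      then show ?thesis using GA[OF niceB[OF B]] by (simp add: ty_def)
    qed
    define \<phi> where "\<phi> \<tau> = tt (\<tau>, SOME m. \<exists>B\<in>nsubsets S' n. ty B = \<tau> \<and> card (Zs n d B) = m)" for \<tau>
    have phiB: "COL B = \<phi> (ty B)" if B: "B \<in> nsubsets S' n" for B
    proof -
      have "(SOME m. \<exists>B'\<in>nsubsets S' n. ty B' = ty B \<and> card (Zs n d B') = m) = card (Zs n d B)"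
      proof (rule some_equality)
        show "\<exists>B'\<in>nsubsets S' n. ty B' = ty B \<and> card (Zs n d B') = card (Zs n d B)" using B by blast
        fix m assume "\<exists>B'\<in>nsubsets S' n. ty B' = ty B \<and> card (Zs n d B') = m"
        then obtain B' where "ty B' = ty B" "card (Zs n d B') = m" by blast
        then show "m = card (Zs n d B)" using card_Zs_unique[of n d B' B] by (simp add: ty_def)
      qed
      then show ?thesis using COLB[OF B] by (simp add: \<phi>_def)
    qed
    have "COL ` nsubsets S' n \<subseteq> \<phi> ` CRs" using phiB tyCR by auto
    then have "card (COL ` nsubsets S' n) \<le> card (\<phi> ` CRs)" using finCR by (simp add: card_mono)
    also have "\<dots> \<le> card CRs" using finCR by (rule card_image_le)
    finally have "card (COL ` nsubsets S' n) \<le> P n d k" using PC by simp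
    moreover have "order_equiv S' ?S" unfolding S'_def by (rule emb_order_equiv[OF H(1)])
    ultimately show "\<exists>S'. S' \<subseteq> ?S \<and> order_equiv S' ?S \<and> card (COL ` nsubsets S' n) \<le> P n d k"
      using S'S by blast
  qed
  then have "\<exists>t. T_prop n ?S t" by blast
  then have "T n ?S = enat (LEAST t. T_prop n ?S t)" by (simp add: T_def)
  also have "\<dots> \<le> enat (P n d k)" using Least_le[of "T_prop n ?S", OF TP] by simp
  finally show ?thesis .
qed

end
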